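(* Let $(X_1,\dots,X_n)$, $2\le n\le\infty$, be a random vector or sequence such that for each $l=2,\dots,n$ the vector $(X_1,\dots,X_l)$ is RE$(l)$. Then $(X_1,\dots,X_n)$ is SIAMX* and SIAMN*. Moreover, it is SSIAMX* if $\Pr[X_l>\max(|X_1|,\dots,|X_{l-1}|)]>0$ for $l=3,\dots,n$, and it is SSIAMN* if $\Pr[X_l<-\max(|X_1|,\dots,|X_{l-1}|)]>0$ for $l=3,\dots,n$.
   Context: A random vector $(Y_1,\dots,Y_l)$ is RE$(k,l)$ for $1\le k<l$ if its distribution is unchanged when $(Y_k,Y_l)$ is replaced by $(-Y_l,-Y_k)$ (other coordinates fixed); it is RE$(l)$ if it is RE$(k,l)$ for some $k<l$. For random variables $U,V$, $U\le_{\mathrm{st}}V$ means $F_U(x)\ge F_V(x)$ for all $x$ ($F$ the cdf), and $U<_{\mathrm{st}}V$ means additionally strict inequality for at least one $x$. $(X_1,\dots,X_n)$ is SIAMX* if $|X_1|\overset{d}{=}|\max(X_1,X_2)|$ and $|\max(X_1,\dots,X_{l-1})|\le_{\mathrm{st}}|\max(X_1,\dots,X_l)|$ for $l=3,\dots,n$; SSIAMX* if moreover these last inequalities are strict ($<_{\mathrm{st}}$). SIAMN* and SSIAMN* are defined the same way with $\max$ replaced by $\min$ (including $|X_1|\overset{d}{=}|\min(X_1,X_2)|$). *)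

theory Defs
  imports "HOL-Probability.Probability"
begin

text \<open>Random vectors/sequences are indexed from 1: X 1, X 2, ... ; the length n is an
  extended natural number (n = \<infinity> for a sequence).\<close>

definition prefix_law :: "'a measure \<Rightarrow> (nat \<Rightarrow> 'a \<Rightarrow> real) \<Rightarrow> nat \<Rightarrow> (nat \<Rightarrow> real) measure" where
  "prefix_law M Y l = distr M (PiM {1..l} (\<lambda>_. borel)) (\<lambda>\<omega>. \<lambda>i\<in>{1..l}. Y i \<omega>)"

definition RE_kl :: "'a measure \<Rightarrow> (nat \<Rightarrow> 'a \<Rightarrow> real) \<Rightarrow> nat \<Rightarrow> nat \<Rightarrow> bool" where
  "RE_kl M Y k l \<longleftrightarrow> 1 \<le> k \<and> k < l \<and>
     prefix_law M Y l =
     prefix_law M (\<lambda>i \<omega>. if i = k then - Y l \<omega> else if i = l then - Y k \<omega> else Y i \<omega>) l"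

definition RE :: "'a measure \<Rightarrow> (nat \<Rightarrow> 'a \<Rightarrow> real) \<Rightarrow> nat \<Rightarrow> bool" where
  "RE M Y l \<longleftrightarrow> (\<exists>k. 1 \<le> k \<and> k < l \<and> RE_kl M Y k l)"

definition cdf_rv :: "'a measure \<Rightarrow> ('a \<Rightarrow> real) \<Rightarrow> real \<Rightarrow> real" where
  "cdf_rv M U x = measure M {\<omega> \<in> space M. U \<omega> \<le> x}"

definition st_le :: "'a measure \<Rightarrow> ('a \<Rightarrow> real) \<Rightarrow> ('a \<Rightarrow> real) \<Rightarrow> bool" where
  "st_le M U V \<longleftrightarrow> (\<forall>x. cdf_rv M U x \<ge> cdf_rv M V x)"

definition st_less :: "'a measure \<Rightarrow> ('a \<Rightarrow> real) \<Rightarrow> ('a \<Rightarrow> real) \<Rightarrow> bool" where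
  "st_less M U V \<longleftrightarrow> st_le M U V \<and> (\<exists>x. cdf_rv M U x > cdf_rv M V x)"

definition eq_dist :: "'a measure \<Rightarrow> ('a \<Rightarrow> real) \<Rightarrow> ('a \<Rightarrow> real) \<Rightarrow> bool" where
  "eq_dist M U V \<longleftrightarrow> distr M borel U = distr M borel V"

definition maxX :: "(nat \<Rightarrow> 'a \<Rightarrow> real) \<Rightarrow> nat \<Rightarrow> 'a \<Rightarrow> real" where
  "maxX X l \<omega> = Max ((\<lambda>i. X i \<omega>) ` {1..l})"

definition minX :: "(nat \<Rightarrow> 'a \<Rightarrow> real) \<Rightarrow> nat \<Rightarrow> 'a \<Rightarrow> real" where
  "minX X l \<omega> = Min ((\<lambda>i. X i \<omega>) ` {1..l})"

definition SIAMX :: "'a measure \<Rightarrow> (nat \<Rightarrow> 'a \<Rightarrow> real) \<Rightarrow> enat \<Rightarrow> bool" where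
  "SIAMX M X n \<longleftrightarrow> eq_dist M (\<lambda>\<omega>. \<bar>X 1 \<omega>\<bar>) (\<lambda>\<omega>. \<bar>maxX X 2 \<omega>\<bar>) \<and>
     (\<forall>l. 3 \<le> l \<and> enat l \<le> n \<longrightarrow> st_le M (\<lambda>\<omega>. \<bar>maxX X (l - 1) \<omega>\<bar>) (\<lambda>\<omega>. \<bar>maxX X l \<omega>\<bar>))"

definition SSIAMX :: "'a measure \<Rightarrow> (nat \<Rightarrow> 'a \<Rightarrow> real) \<Rightarrow> enat \<Rightarrow> bool" where
  "SSIAMX M X n \<longleftrightarrow> eq_dist M (\<lambda>\<omega>. \<bar>X 1 \<omega>\<bar>) (\<lambda>\<omega>. \<bar>maxX X 2 \<omega>\<bar>) \<and>
     (\<forall>l. 3 \<le> l \<and> enat l \<le> n \<longrightarrow> st_less M (\<lambda>\<omega>. \<bar>maxX X (l - 1) \<omega>\<bar>) (\<lambda>\<omega>. \<bar>maxX X l \<omega>\<bar>))"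

definition SIAMN :: "'a measure \<Rightarrow> (nat \<Rightarrow> 'a \<Rightarrow> real) \<Rightarrow> enat \<Rightarrow> bool" where
  "SIAMN M X n \<longleftrightarrow> eq_dist M (\<lambda>\<omega>. \<bar>X 1 \<omega>\<bar>) (\<lambda>\<omega>. \<bar>minX X 2 \<omega>\<bar>) \<and>
     (\<forall>l. 3 \<le> l \<and> enat l \<le> n \<longrightarrow> st_le M (\<lambda>\<omega>. \<bar>minX X (l - 1) \<omega>\<bar>) (\<lambda>\<omega>. \<bar>minX X l \<omega>\<bar>))"

definition SSIAMN :: "'a measure \<Rightarrow> (nat \<Rightarrow> 'a \<Rightarrow> real) \<Rightarrow> enat \<Rightarrow> bool" where
  "SSIAMN M X n \<longleftrightarrow> eq_dist M (\<lambda>\<omega>. \<bar>X 1 \<omega>\<bar>) (\<lambda>\<omega>. \<bar>minX X 2 \<omega>\<bar>) \<and>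
     (\<forall>l. 3 \<le> l \<and> enat l \<le> n \<longrightarrow> st_less M (\<lambda>\<omega>. \<bar>minX X (l - 1) \<omega>\<bar>) (\<lambda>\<omega>. \<bar>minX X l \<omega>\<bar>))"

end

theory Submission
  imports Defs
begin



lemma RE_swap:
  assumes P: "prob_space M" and R: "RE_kl M X k l"
    and mX: "\<And>i. i \<in> {1..l} \<Longrightarrow> X i \<in> borel_measurable M"
    and mQ: "Measurable.pred (PiM {1..l} (\<lambda>_. borel)) Q"
    and loc: "\<And>x y. (\<And>i. i \<in> {1..l} \<Longrightarrow> x i = y i) \<Longrightarrow> Q x = Q y"
  shows "measure M {\<omega>\<in>space M. Q (\<lambda>i. X i \<omega>)} =
         measure M {\<omega>\<in>space M. Q (\<lambda>i. if i = k then - X l \<omega> else if i = l then - X k \<omega> else X i \<omega>)}"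
proof -
  let ?N = "PiM {1..l} (\<lambda>_. borel) :: (nat \<Rightarrow> real) measure"
  let ?Y = "\<lambda>i \<omega>. if i = k then - X l \<omega> else if i = l then - X k \<omega> else X i \<omega>"
  have kl: "k \<in> {1..l}" "l \<in> {1..l}" using R unfolding RE_kl_def by auto
  have mY: "?Y i \<in> borel_measurable M" if "i \<in> {1..l}" for i
    using mX[OF that] mX[OF kl(1)] mX[OF kl(2)] by auto
  have f1: "(\<lambda>\<omega>. \<lambda>i\<in>{1..l}. X i \<omega>) \<in> measurable M ?N"
    using mX by (intro measurable_restrict) auto
  have f2: "(\<lambda>\<omega>. \<lambda>i\<in>{1..l}. ?Y i \<omega>) \<in> measurable M ?N"
    using mY by (intro measurable_restrict) auto
  have S: "{x\<in>space ?N. Q x} \<in> sets ?N" using mQ by measurable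
  have eq: "distr M ?N (\<lambda>\<omega>. \<lambda>i\<in>{1..l}. X i \<omega>) = distr M ?N (\<lambda>\<omega>. \<lambda>i\<in>{1..l}. ?Y i \<omega>)"
    using R unfolding RE_kl_def prefix_law_def by simp
  have "measure M {\<omega>\<in>space M. Q (\<lambda>i. X i \<omega>)} = measure M ((\<lambda>\<omega>. \<lambda>i\<in>{1..l}. X i \<omega>) -` {x\<in>space ?N. Q x} \<inter> space M)"
  proof -
    have "{\<omega>\<in>space M. Q (\<lambda>i. X i \<omega>)} = (\<lambda>\<omega>. \<lambda>i\<in>{1..l}. X i \<omega>) -` {x\<in>space ?N. Q x} \<inter> space M"
      using measurable_space[OF f1] loc[of "\<lambda>i. X i _" "restrict (\<lambda>i. X i _) {1..l}"] by auto
    then show ?thesis by simp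
  qed
  also have "\<dots> = measure (distr M ?N (\<lambda>\<omega>. \<lambda>i\<in>{1..l}. X i \<omega>)) {x\<in>space ?N. Q x}"
    using measure_distr[OF f1 S] by simp
  also have "\<dots> = measure (distr M ?N (\<lambda>\<omega>. \<lambda>i\<in>{1..l}. ?Y i \<omega>)) {x\<in>space ?N. Q x}"
    using eq by simp
  also have "\<dots> = measure M ((\<lambda>\<omega>. \<lambda>i\<in>{1..l}. ?Y i \<omega>) -` {x\<in>space ?N. Q x} \<inter> space M)"
    using measure_distr[OF f2 S] by simp
  also have "\<dots> = measure M {\<omega>\<in>space M. Q (\<lambda>i. ?Y i \<omega>)}"
  proof -
    have "{\<omega>\<in>space M. Q (\<lambda>i. ?Y i \<omega>)} = (\<lambda>\<omega>. \<lambda>i\<in>{1..l}. ?Y i \<omega>) -` {x\<in>space ?N. Q x} \<inter> space M"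
      using measurable_space[OF f2] loc[of "\<lambda>i. ?Y i _" "restrict (\<lambda>i. ?Y i _) {1..l}"] by auto
    then show ?thesis by simp
  qed
  finally show ?thesis .
qed


lemma split_l: "1 \<le> l \<Longrightarrow> {1..l} = insert l {1..l-1::nat}" by auto

lemma q_max: fixes f :: "nat \<Rightarrow> real" shows
 "(((\<forall>i\<in>insert l S. f i \<le> t) \<and> (\<exists>i\<in>insert l S. -t \<le> f i)) \<and> \<not>((\<forall>i\<in>S. f i \<le> t) \<and> (\<exists>i\<in>S. -t \<le> f i)))
   \<longleftrightarrow> (\<forall>i\<in>S. f i < -t) \<and> -t \<le> f l \<and> f l \<le> t"
proof (cases "0 \<le> t")
  case True then show ?thesis by (auto simp: not_le)
next
  case False then show ?thesis by (auto simp: not_le)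
qed
lemma q_min: fixes f :: "nat \<Rightarrow> real" shows
 "(((\<forall>i\<in>insert l S. -t \<le> f i) \<and> (\<exists>i\<in>insert l S. f i \<le> t)) \<and> \<not>((\<forall>i\<in>S. -t \<le> f i) \<and> (\<exists>i\<in>S. f i \<le> t)))
   \<longleftrightarrow> (\<forall>i\<in>S. t < f i) \<and> -t \<le> f l \<and> f l \<le> t"
proof (cases "0 \<le> t")
  case True then show ?thesis by (auto simp: not_le) 
next
  case False then show ?thesis by (auto simp: not_le)
qed

lemma abs_maxX:
  assumes "m \<ge> 1" shows "\<bar>maxX X m \<omega>\<bar> \<le> t \<longleftrightarrow> (\<forall>i\<in>{1..m}. X i \<omega> \<le> t) \<and> (\<exists>i\<in>{1..m}. -t \<le> X i \<omega>)"
proof -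
  have "\<bar>maxX X m \<omega>\<bar> \<le> t \<longleftrightarrow> maxX X m \<omega> \<le> t \<and> -t \<le> maxX X m \<omega>" by linarith
  also have "\<dots> \<longleftrightarrow> (\<forall>i\<in>{1..m}. X i \<omega> \<le> t) \<and> (\<exists>i\<in>{1..m}. -t \<le> X i \<omega>)"
    using assms unfolding maxX_def by (simp add: Max_le_iff Max_ge_iff)
  finally show ?thesis .
qed

lemma abs_minX:
  assumes "m \<ge> 1" shows "\<bar>minX X m \<omega>\<bar> \<le> t \<longleftrightarrow> (\<forall>i\<in>{1..m}. -t \<le> X i \<omega>) \<and> (\<exists>i\<in>{1..m}. X i \<omega> \<le> t)"
proof -
  have "\<bar>minX X m \<omega>\<bar> \<le> t \<longleftrightarrow> minX X m \<omega> \<le> t \<and> -t \<le> minX X m \<omega>" by linarith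
  also have "\<dots> \<longleftrightarrow> (\<forall>i\<in>{1..m}. -t \<le> X i \<omega>) \<and> (\<exists>i\<in>{1..m}. X i \<omega> \<le> t)"
    using assms unfolding minX_def by (auto simp add: Min_le_iff Min_ge_iff)
  finally show ?thesis by blast
qed


lemma max_step:
  assumes P: "prob_space M" and R: "RE_kl M X k l" and l2: "2 \<le> l"
    and mX: "\<And>i. i \<in> {1..l} \<Longrightarrow> X i \<in> borel_measurable M"
  shows "measure M ({\<omega>\<in>space M. \<bar>maxX X l \<omega>\<bar> \<le> t} - {\<omega>\<in>space M. \<bar>maxX X (l-1) \<omega>\<bar> \<le> t})
       = measure M {\<omega>\<in>space M. (\<forall>i\<in>{1..l-1}. i \<noteq> k \<longrightarrow> X i \<omega> < -t) \<and> t < X l \<omega> \<and> -t \<le> X k \<omega> \<and> X k \<omega> \<le> t}"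
proof -
  have k: "1 \<le> k" "k < l" using R unfolding RE_kl_def by auto
  let ?Q = "\<lambda>x::nat\<Rightarrow>real. (\<forall>i\<in>{1..l-1}. x i < -t) \<and> -t \<le> x l \<and> x l \<le> t"
  have mQ: "Measurable.pred (PiM {1..l} (\<lambda>_. borel)) ?Q"
    by measurable (use l2 in auto)
  have loc: "?Q x = ?Q y" if h: "\<And>i. i \<in> {1..l} \<Longrightarrow> x i = y i" for x y
  proof -
    have "\<forall>i\<in>{1..l-1}. x i = y i" using h by auto
    moreover have "x l = y l" using h l2 by auto
    ultimately show ?thesis by auto
  qed
  note sw = RE_swap[OF P R mX mQ loc]
  have e1: "{\<omega>\<in>space M. \<bar>maxX X l \<omega>\<bar> \<le> t} - {\<omega>\<in>space M. \<bar>maxX X (l-1) \<omega>\<bar> \<le> t}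
      = {\<omega>\<in>space M. ?Q (\<lambda>i. X i \<omega>)}"
  proof -
    have "(\<bar>maxX X l \<omega>\<bar> \<le> t \<and> \<not> \<bar>maxX X (l-1) \<omega>\<bar> \<le> t) \<longleftrightarrow> ?Q (\<lambda>i. X i \<omega>)" for \<omega>
    proof -
      have a: "1 \<le> l" "1 \<le> l-1" using l2 by auto
      have s: "{1..l} = insert l {1..l-1}" using split_l a by auto
      note h1 = abs_maxX[OF a(1), of X \<omega> t, unfolded s]
      note h2 = abs_maxX[OF a(2), of X \<omega> t]
      show ?thesis unfolding h1 h2 by (rule q_max)
    qed
    then show ?thesis by blast
  qed
  have e2: "{\<omega>\<in>space M. ?Q (\<lambda>i. if i = k then - X l \<omega> else if i = l then - X k \<omega> else X i \<omega>)}
     = {\<omega>\<in>space M. (\<forall>i\<in>{1..l-1}. i \<noteq> k \<longrightarrow> X i \<omega> < -t) \<and> t < X l \<omega> \<and> -t \<le> X k \<omega> \<and> X k \<omega> \<le> t}"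
  proof -
    have "?Q (\<lambda>i. if i = k then - X l \<omega> else if i = l then - X k \<omega> else X i \<omega>) \<longleftrightarrow>
      (\<forall>i\<in>{1..l-1}. i \<noteq> k \<longrightarrow> X i \<omega> < -t) \<and> t < X l \<omega> \<and> -t \<le> X k \<omega> \<and> X k \<omega> \<le> t" for \<omega>
    proof -
      have kS: "k \<in> {1..l-1}" using k by auto
      have A0: "(\<forall>i\<in>{1..l-1}. (\<lambda>x. x < -t) (if i = k then - X l \<omega> else if i = l then - X k \<omega> else X i \<omega>))
         \<longleftrightarrow> (\<forall>i\<in>{1..l-1}. (\<lambda>x. x < -t) (if i = k then - X l \<omega> else X i \<omega>))"
        by (rule ball_cong) auto
      also have "\<dots> \<longleftrightarrow> (\<forall>i\<in>{1..l-1}. i \<noteq> k \<longrightarrow> (\<lambda>x. x < -t) (X i \<omega>)) \<and> (\<lambda>x. x < -t) (- X l \<omega>)"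
        using kS by (auto simp del: atLeastAtMost_iff)
      finally have A: "(\<forall>i\<in>{1..l-1}. (\<lambda>x. x < -t) (if i = k then - X l \<omega> else if i = l then - X k \<omega> else X i \<omega>))
         \<longleftrightarrow> (\<forall>i\<in>{1..l-1}. i \<noteq> k \<longrightarrow> (\<lambda>x. x < -t) (X i \<omega>)) \<and> (\<lambda>x. x < -t) (- X l \<omega>)" .
      have B: "(if l = k then - X l \<omega> else if l = l then - X k \<omega> else X l \<omega>) = - X k \<omega>" using k by simp
      show ?thesis using A B by auto
    qed
    then show ?thesis by blast
  qed
  show ?thesis using e1 e2 sw by simp
qed

lemma min_step:
  assumes P: "prob_space M" and R: "RE_kl M X k l" and l2: "2 \<le> l"
    and mX: "\<And>i. i \<in> {1..l} \<Longrightarrow> X i \<in> borel_measurable M"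
  shows "measure M ({\<omega>\<in>space M. \<bar>minX X l \<omega>\<bar> \<le> t} - {\<omega>\<in>space M. \<bar>minX X (l-1) \<omega>\<bar> \<le> t})
       = measure M {\<omega>\<in>space M. (\<forall>i\<in>{1..l-1}. i \<noteq> k \<longrightarrow> t < X i \<omega>) \<and> X l \<omega> < -t \<and> -t \<le> X k \<omega> \<and> X k \<omega> \<le> t}"
proof -
  have k: "1 \<le> k" "k < l" using R unfolding RE_kl_def by auto
  let ?Q = "\<lambda>x::nat\<Rightarrow>real. (\<forall>i\<in>{1..l-1}. t < x i) \<and> -t \<le> x l \<and> x l \<le> t"
  have mQ: "Measurable.pred (PiM {1..l} (\<lambda>_. borel)) ?Q"
    by measurable (use l2 in auto)
  have loc: "?Q x = ?Q y" if h: "\<And>i. i \<in> {1..l} \<Longrightarrow> x i = y i" for x y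
  proof -
    have "\<forall>i\<in>{1..l-1}. x i = y i" using h by auto
    moreover have "x l = y l" using h l2 by auto
    ultimately show ?thesis by auto
  qed
  note sw = RE_swap[OF P R mX mQ loc]
  have e1: "{\<omega>\<in>space M. \<bar>minX X l \<omega>\<bar> \<le> t} - {\<omega>\<in>space M. \<bar>minX X (l-1) \<omega>\<bar> \<le> t}
      = {\<omega>\<in>space M. ?Q (\<lambda>i. X i \<omega>)}"
  proof -
    have "(\<bar>minX X l \<omega>\<bar> \<le> t \<and> \<not> \<bar>minX X (l-1) \<omega>\<bar> \<le> t) \<longleftrightarrow> ?Q (\<lambda>i. X i \<omega>)" for \<omega>
    proof -
      have a: "1 \<le> l" "1 \<le> l-1" using l2 by auto
      have s: "{1..l} = insert l {1..l-1}" using split_l a by auto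
      note h1 = abs_minX[OF a(1), of X \<omega> t, unfolded s]
      note h2 = abs_minX[OF a(2), of X \<omega> t]
      show ?thesis unfolding h1 h2 by (rule q_min)
    qed
    then show ?thesis by blast
  qed
  have e2: "{\<omega>\<in>space M. ?Q (\<lambda>i. if i = k then - X l \<omega> else if i = l then - X k \<omega> else X i \<omega>)}
     = {\<omega>\<in>space M. (\<forall>i\<in>{1..l-1}. i \<noteq> k \<longrightarrow> t < X i \<omega>) \<and> X l \<omega> < -t \<and> -t \<le> X k \<omega> \<and> X k \<omega> \<le> t}"
  proof -
    have "?Q (\<lambda>i. if i = k then - X l \<omega> else if i = l then - X k \<omega> else X i \<omega>) \<longleftrightarrow>
      (\<forall>i\<in>{1..l-1}. i \<noteq> k \<longrightarrow> t < X i \<omega>) \<and> X l \<omega> < -t \<and> -t \<le> X k \<omega> \<and> X k \<omega> \<le> t" for \<omega>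
    proof -
      have kS: "k \<in> {1..l-1}" using k by auto
      have A0: "(\<forall>i\<in>{1..l-1}. (\<lambda>x. t < x) (if i = k then - X l \<omega> else if i = l then - X k \<omega> else X i \<omega>))
         \<longleftrightarrow> (\<forall>i\<in>{1..l-1}. (\<lambda>x. t < x) (if i = k then - X l \<omega> else X i \<omega>))"
        by (rule ball_cong) auto
      also have "\<dots> \<longleftrightarrow> (\<forall>i\<in>{1..l-1}. i \<noteq> k \<longrightarrow> (\<lambda>x. t < x) (X i \<omega>)) \<and> (\<lambda>x. t < x) (- X l \<omega>)"
        using kS by (auto simp del: atLeastAtMost_iff)
      finally have A: "(\<forall>i\<in>{1..l-1}. (\<lambda>x. t < x) (if i = k then - X l \<omega> else if i = l then - X k \<omega> else X i \<omega>))
         \<longleftrightarrow> (\<forall>i\<in>{1..l-1}. i \<noteq> k \<longrightarrow> (\<lambda>x. t < x) (X i \<omega>)) \<and> (\<lambda>x. t < x) (- X l \<omega>)" .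
      have B: "(if l = k then - X l \<omega> else if l = l then - X k \<omega> else X l \<omega>) = - X k \<omega>" using k by simp
      show ?thesis using A B by auto
    qed
    then show ?thesis by blast
  qed
  show ?thesis using e1 e2 sw by simp
qed



lemma cmp:
  assumes "finite_measure M" "A \<in> sets M" "B \<in> sets M"
  shows "measure M A - measure M B = measure M (A - B) - measure M (B - A)"
  using finite_measure.finite_measure_Diff'[OF assms(1) assms(2,3)]
    finite_measure.finite_measure_Diff'[OF assms(1) assms(3,2)]
  by (simp add: Int_commute)

lemma pred_lt: "f \<in> borel_measurable M \<Longrightarrow> g \<in> borel_measurable M \<Longrightarrow> Measurable.pred M (\<lambda>\<omega>. (f \<omega>::real) < g \<omega>)"
  unfolding pred_def by (rule borel_measurable_less)

lemma pred_le: "f \<in> borel_measurable M \<Longrightarrow> g \<in> borel_measurable M \<Longrightarrow> Measurable.pred M (\<lambda>\<omega>. (f \<omega>::real) \<le> g \<omega>)"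
  unfolding pred_def by (rule borel_measurable_le)

lemma sets_G:
  fixes X :: "nat \<Rightarrow> 'a \<Rightarrow> real"
  assumes mX: "\<And>i. i \<in> {1..l} \<Longrightarrow> X i \<in> borel_measurable M" and k: "k \<in> {1..l}"
  shows "{\<omega>\<in>space M. (\<forall>i\<in>{1..l-1}. i \<noteq> k \<longrightarrow> X i \<omega> < c) \<and> a < X l \<omega> \<and> b \<le> X k \<omega> \<and> X k \<omega> \<le> d} \<in> sets M"
proof -
  have l: "l \<in> {1..l}" using k by simp
  note [measurable] = mX[OF k] mX[OF l]
  have p1: "Measurable.pred M (\<lambda>\<omega>. \<forall>i\<in>{1..l-1}. i \<noteq> k \<longrightarrow> X i \<omega> < c)"
  proof (rule pred_intros_finite)
    fix i assume "i \<in> {1..l-1}"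
    then have "i \<in> {1..l}" by auto
    note [measurable] = mX[OF this]
    have "Measurable.pred M (\<lambda>\<omega>. X i \<omega> < c)" by (intro pred_lt borel_measurable_const mX[OF \<open>i \<in> {1..l}\<close>])
    then show "Measurable.pred M (\<lambda>\<omega>. i \<noteq> k \<longrightarrow> X i \<omega> < c)" by (cases "i = k") auto
  qed simp
  have p2: "Measurable.pred M (\<lambda>\<omega>. a < X l \<omega>)" "Measurable.pred M (\<lambda>\<omega>. X l \<omega> < a)"
    "Measurable.pred M (\<lambda>\<omega>. b \<le> X k \<omega>)" "Measurable.pred M (\<lambda>\<omega>. X k \<omega> \<le> d)" by (intro pred_lt pred_le borel_measurable_const mX k l)+
  show ?thesis unfolding pred_def[symmetric]
    by (intro pred_intros_logic(3) p1 p2)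
qed

lemma sets_G2:
  fixes X :: "nat \<Rightarrow> 'a \<Rightarrow> real"
  assumes mX: "\<And>i. i \<in> {1..l} \<Longrightarrow> X i \<in> borel_measurable M" and k: "k \<in> {1..l}"
  shows "{\<omega>\<in>space M. (\<forall>i\<in>{1..l-1}. i \<noteq> k \<longrightarrow> c < X i \<omega>) \<and> X l \<omega> < a \<and> b \<le> X k \<omega> \<and> X k \<omega> \<le> d} \<in> sets M"
proof -
  have l: "l \<in> {1..l}" using k by simp
  note [measurable] = mX[OF k] mX[OF l]
  have p1: "Measurable.pred M (\<lambda>\<omega>. \<forall>i\<in>{1..l-1}. i \<noteq> k \<longrightarrow> c < X i \<omega>)"
  proof (rule pred_intros_finite)
    fix i assume "i \<in> {1..l-1}"
    then have "i \<in> {1..l}" by auto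
    note [measurable] = mX[OF this]
    have "Measurable.pred M (\<lambda>\<omega>. c < X i \<omega>)" by (intro pred_lt borel_measurable_const mX[OF \<open>i \<in> {1..l}\<close>])
    then show "Measurable.pred M (\<lambda>\<omega>. i \<noteq> k \<longrightarrow> c < X i \<omega>)" by (cases "i = k") auto
  qed simp
  have p2: "Measurable.pred M (\<lambda>\<omega>. a < X l \<omega>)" "Measurable.pred M (\<lambda>\<omega>. X l \<omega> < a)"
    "Measurable.pred M (\<lambda>\<omega>. b \<le> X k \<omega>)" "Measurable.pred M (\<lambda>\<omega>. X k \<omega> \<le> d)" by (intro pred_lt pred_le borel_measurable_const mX k l)+
  show ?thesis unfolding pred_def[symmetric]
    by (intro pred_intros_logic(3) p1 p2)
qed

lemma meas_Mabs:
  fixes X :: "nat \<Rightarrow> 'a \<Rightarrow> real"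
  assumes mX: "\<And>i. i \<in> {1..m} \<Longrightarrow> X i \<in> borel_measurable M"
  shows "(\<lambda>\<omega>. Max ((\<lambda>i. \<bar>X i \<omega>\<bar>) ` {1..m})) \<in> borel_measurable M"
  using mX by (intro borel_measurable_Max) auto

lemma meas_maxX:
  fixes X :: "nat \<Rightarrow> 'a \<Rightarrow> real"
  assumes mX: "\<And>i. i \<in> {1..m} \<Longrightarrow> X i \<in> borel_measurable M"
  shows "(\<lambda>\<omega>. maxX X m \<omega>) \<in> borel_measurable M"
  unfolding maxX_def by (rule borel_measurable_Max) (use mX in auto)

lemma meas_minX:
  fixes X :: "nat \<Rightarrow> 'a \<Rightarrow> real"
  assumes mX: "\<And>i. i \<in> {1..m} \<Longrightarrow> X i \<in> borel_measurable M"
  shows "(\<lambda>\<omega>. minX X m \<omega>) \<in> borel_measurable M"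
  unfolding minX_def by (rule borel_measurable_Min) (use mX in auto)

lemma pos_rat:
  fixes f g :: "'a \<Rightarrow> real"
  assumes P: "prob_space M" and [measurable]: "f \<in> borel_measurable M" "g \<in> borel_measurable M"
    and pos: "measure M {\<omega>\<in>space M. f \<omega> < g \<omega>} > 0"
  shows "\<exists>q. measure M {\<omega>\<in>space M. f \<omega> \<le> q \<and> q < g \<omega>} > 0"
proof (rule ccontr)
  interpret prob_space M by fact
  assume "\<not> ?thesis"
  then have z: "measure M {\<omega>\<in>space M. f \<omega> \<le> q \<and> q < g \<omega>} = 0" for q
    using measure_nonneg[of M] by (meson not_less order_antisym)
  have S: "{\<omega>\<in>space M. f \<omega> \<le> q \<and> q < g \<omega>} \<in> sets M" for q by measurable
  have N: "{\<omega>\<in>space M. f \<omega> \<le> q \<and> q < g \<omega>} \<in> null_sets M" for q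
    using z[of q] S[of q] by (simp add: emeasure_eq_measure null_sets_def)
  have U: "(\<Union>q\<in>\<rat>. {\<omega>\<in>space M. f \<omega> \<le> q \<and> q < g \<omega>}) \<in> null_sets M"
    by (rule null_sets_UN') (auto simp: countable_rat N)
  have sub: "{\<omega>\<in>space M. f \<omega> < g \<omega>} \<subseteq> (\<Union>q\<in>\<rat>. {\<omega>\<in>space M. f \<omega> \<le> q \<and> q < g \<omega>})"
  proof
    fix \<omega> assume "\<omega> \<in> {\<omega>\<in>space M. f \<omega> < g \<omega>}"
    then obtain q where "q \<in> \<rat>" "f \<omega> < q" "q < g \<omega>" "\<omega> \<in> space M" using Rats_dense_in_real by blast
    then show "\<omega> \<in> (\<Union>q\<in>\<rat>. {\<omega>\<in>space M. f \<omega> \<le> q \<and> q < g \<omega>})" by (intro UN_I[of q]) auto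
  qed
  have "measure M {\<omega>\<in>space M. f \<omega> < g \<omega>} \<le> measure M (\<Union>q\<in>\<rat>. {\<omega>\<in>space M. f \<omega> \<le> q \<and> q < g \<omega>})"
    using U sub by (intro finite_measure_mono) auto
  also have "\<dots> = 0" using U by (simp add: emeasure_eq_measure null_sets_def)
  finally show False using pos by simp
qed

lemma eq_dist_cdf:
  fixes f g :: "'a \<Rightarrow> real"
  assumes P: "prob_space M" and f: "f \<in> borel_measurable M" and g: "g \<in> borel_measurable M"
    and c: "\<And>x. cdf_rv M f x = cdf_rv M g x"
  shows "eq_dist M f g"
proof -
  interpret prob_space M by fact
  have cd: "cdf (distr M borel h) x = cdf_rv M h x" if h: "h \<in> borel_measurable M" for h x
  proof -
    have "cdf (distr M borel h) x = measure M (h -` {..x} \<inter> space M)"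
      unfolding cdf_def using h by (simp add: measure_distr)
    also have "h -` {..x} \<inter> space M = {\<omega>\<in>space M. h \<omega> \<le> x}" by auto
    finally show ?thesis unfolding cdf_rv_def .
  qed
  show ?thesis unfolding eq_dist_def
    by (rule cdf_unique) (use f g c cd in auto)
qed



lemma max_mono:
  fixes X :: "nat \<Rightarrow> 'a \<Rightarrow> real"
  assumes P: "prob_space M" and R: "RE_kl M X k l" and l2: "2 \<le> l"
    and mX: "\<And>i. i \<in> {1..l} \<Longrightarrow> X i \<in> borel_measurable M"
  shows "measure M {\<omega>\<in>space M. \<bar>maxX X l \<omega>\<bar> \<le> t} \<le> measure M {\<omega>\<in>space M. \<bar>maxX X (l-1) \<omega>\<bar> \<le> t}"
    and "3 \<le> l \<Longrightarrow> 0 < measure M {\<omega>\<in>space M. Max ((\<lambda>i. \<bar>X i \<omega>\<bar>) ` {1..l-1}) \<le> t \<and> t < X l \<omega>} \<Longrightarrow>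
      measure M {\<omega>\<in>space M. \<bar>maxX X l \<omega>\<bar> \<le> t} < measure M {\<omega>\<in>space M. \<bar>maxX X (l-1) \<omega>\<bar> \<le> t}"
    and "l = 2 \<Longrightarrow> measure M {\<omega>\<in>space M. \<bar>maxX X l \<omega>\<bar> \<le> t} = measure M {\<omega>\<in>space M. \<bar>maxX X (l-1) \<omega>\<bar> \<le> t}"
proof -
  interpret prob_space M by fact
  have k: "1 \<le> k" "k < l" using R unfolding RE_kl_def by auto
  have kin: "k \<in> {1..l}" using k by simp
  have a: "1 \<le> l" "1 \<le> l-1" using l2 by auto
  define E1 where "E1 = {\<omega>\<in>space M. \<bar>maxX X l \<omega>\<bar> \<le> t}"
  define E2 where "E2 = {\<omega>\<in>space M. \<bar>maxX X (l-1) \<omega>\<bar> \<le> t}"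
  define G where "G = {\<omega>\<in>space M. (\<forall>i\<in>{1..l-1}. i \<noteq> k \<longrightarrow> X i \<omega> < -t) \<and> t < X l \<omega> \<and> -t \<le> X k \<omega> \<and> X k \<omega> \<le> t}"
  define H where "H = {\<omega>\<in>space M. Max ((\<lambda>i. \<bar>X i \<omega>\<bar>) ` {1..l-1}) \<le> t \<and> t < X l \<omega>}"
  have m1: "(\<lambda>\<omega>. maxX X l \<omega>) \<in> borel_measurable M" using mX by (rule meas_maxX)
  have m2: "(\<lambda>\<omega>. maxX X (l-1) \<omega>) \<in> borel_measurable M" using mX by (intro meas_maxX) auto
  have m3: "(\<lambda>\<omega>. Max ((\<lambda>i. \<bar>X i \<omega>\<bar>) ` {1..l-1})) \<in> borel_measurable M" using mX by (intro meas_Mabs) auto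
  have m4: "X l \<in> borel_measurable M" using mX a by auto
  have sE1: "E1 \<in> sets M" unfolding E1_def pred_def[symmetric]
    by (intro pred_le borel_measurable_abs borel_measurable_const m1)
  have sE2: "E2 \<in> sets M" unfolding E2_def pred_def[symmetric]
    by (intro pred_le borel_measurable_abs borel_measurable_const m2)
  have sG: "G \<in> sets M" unfolding G_def by (rule sets_G[OF mX kin])
  have sH: "H \<in> sets M" unfolding H_def pred_def[symmetric]
    by (intro pred_intros_logic(3) pred_le pred_lt borel_measurable_uminus borel_measurable_const m3 m4)
  have d: "measure M (E1 - E2) = measure M G"
    unfolding E1_def E2_def G_def by (rule max_step[OF P R l2 mX])
  have c: "measure M E1 - measure M E2 = measure M (E1 - E2) - measure M (E2 - E1)"
    by (rule cmp[OF _ sE1 sE2]) (rule finite_measure_axioms)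
  have sD: "E2 - E1 \<in> sets M" using sE1 sE2 by auto
  have E1e: "t < 0 \<Longrightarrow> E1 = {}" "t < 0 \<Longrightarrow> E2 = {}" unfolding E1_def E2_def by auto
  note am1 = abs_maxX[OF a(1), of X]
  note am2 = abs_maxX[OF a(2), of X]
  have GsubT: "G \<subseteq> E2 - E1" if t: "0 \<le> t"
  proof
    fix \<omega> assume w: "\<omega> \<in> G"
    have "\<forall>i\<in>{1..l-1}. X i \<omega> \<le> t"
    proof
      fix i assume "i \<in> {1..l-1}"
      then show "X i \<omega> \<le> t" using w t unfolding G_def by (cases "i = k") force+
    qed
    moreover have "\<exists>i\<in>{1..l-1}. -t \<le> X i \<omega>" using w k unfolding G_def by (intro bexI[of _ k]) auto
    moreover have "\<not> (\<forall>i\<in>{1..l}. X i \<omega> \<le> t)" using w a unfolding G_def by force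
    ultimately show "\<omega> \<in> E2 - E1" using w unfolding E1_def E2_def G_def am1 am2 by auto
  qed
  have HsubT: "H \<subseteq> E2 - E1"
  proof
    fix \<omega> assume w: "\<omega> \<in> H"
    have b: "\<bar>X i \<omega>\<bar> \<le> t" if "i \<in> {1..l-1}" for i
    proof -
      have "\<bar>X i \<omega>\<bar> \<le> Max ((\<lambda>i. \<bar>X i \<omega>\<bar>) ` {1..l-1})" by (rule Max_ge) (use that in auto)
      then show ?thesis using w unfolding H_def by auto
    qed
    have sp: "\<omega> \<in> space M" and tl: "t < X l \<omega>" using w unfolding H_def by auto
    have b1: "\<forall>i\<in>{1..l-1}. X i \<omega> \<le> t"
    proof
      fix i assume "i \<in> {1..l-1}"
      from b[OF this] show "X i \<omega> \<le> t" by (simp add: abs_le_iff)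
    qed
    have one: "1 \<in> {1..l-1}" using a by simp
    have b2: "\<exists>i\<in>{1..l-1}. -t \<le> X i \<omega>"
      using b[OF one] one by (intro bexI[of _ 1]) (simp_all add: abs_le_iff)
    have lin: "l \<in> {1..l}" using a by simp
    have b3: "\<not> (\<forall>i\<in>{1..l}. X i \<omega> \<le> t)"
    proof
      assume "\<forall>i\<in>{1..l}. X i \<omega> \<le> t"
      then have "X l \<omega> \<le> t" using lin by blast
      then show False using tl by simp
    qed
    have "\<omega> \<in> E2" unfolding E2_def using sp b1 b2 am2 by blast
    moreover have "\<omega> \<notin> E1" unfolding E1_def using b3 am1 by blast
    ultimately show "\<omega> \<in> E2 - E1" by blast
  qed
  show "measure M E1 \<le> measure M E2"
  proof (cases "0 \<le> t")
    case True
    have "measure M G \<le> measure M (E2 - E1)" using GsubT[OF True] sD by (intro finite_measure_mono)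
    then show ?thesis using c d by linarith
  next
    case False then show ?thesis using E1e by simp
  qed
  show "measure M E1 < measure M E2" if l3: "3 \<le> l" and pH: "0 < measure M H"
  proof -
    have t: "0 \<le> t"
    proof (rule ccontr)
      assume "\<not> 0 \<le> t"
      then have "H = {}" unfolding H_def using a
        by (auto simp: Max_ge_iff)
      then show False using pH by simp
    qed
    obtain j where j: "j \<in> {1..l-1}" "j \<noteq> k"
    proof (cases "k = 1")
      case True then show ?thesis using that[of 2] l3 by auto
    next
      case False then show ?thesis using that[of 1] l3 by auto
    qed
    have disj: "G \<inter> H = {}"
    proof (rule ccontr)
      assume "G \<inter> H \<noteq> {}"
      then obtain \<omega> where w: "\<omega> \<in> G" "\<omega> \<in> H" by auto
      have "\<bar>X j \<omega>\<bar> \<le> t"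
      proof -
        have "\<bar>X j \<omega>\<bar> \<le> Max ((\<lambda>i. \<bar>X i \<omega>\<bar>) ` {1..l-1})" by (rule Max_ge) (use j in auto)
        then show ?thesis using w(2) unfolding H_def by auto
      qed
      moreover have "X j \<omega> < -t" using w(1) j unfolding G_def by auto
      ultimately show False by linarith
    qed
    have "measure M (G \<union> H) \<le> measure M (E2 - E1)"
      using GsubT[OF t] HsubT sD by (intro finite_measure_mono) auto
    moreover have "measure M (G \<union> H) = measure M G + measure M H"
      using disj sG sH by (intro finite_measure_Union) auto
    ultimately show ?thesis using c d pH by linarith
  qed
  show "measure M E1 = measure M E2" if l2': "l = 2"
  proof (cases "0 \<le> t")
    case True
    have k1: "k = 1" using k l2' by auto
    have "E2 - E1 \<subseteq> G"
    proof
      fix \<omega> assume w: "\<omega> \<in> E2 - E1"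
      have s12: "{1..l} = {1,2}" "{1..l-1} = {1}" using l2' by auto
      show "\<omega> \<in> G" using w l2' k1 unfolding E1_def E2_def G_def am1 am2 s12 by auto
    qed
    then have "E2 - E1 = G" using GsubT[OF True] by auto
    then have "measure M (E2 - E1) = measure M G" by simp
    then show ?thesis using c d by linarith
  next
    case False then show ?thesis using E1e by simp
  qed
qed


lemma min_mono:
  fixes X :: "nat \<Rightarrow> 'a \<Rightarrow> real"
  assumes P: "prob_space M" and R: "RE_kl M X k l" and l2: "2 \<le> l"
    and mX: "\<And>i. i \<in> {1..l} \<Longrightarrow> X i \<in> borel_measurable M"
  shows "measure M {\<omega>\<in>space M. \<bar>minX X l \<omega>\<bar> \<le> t} \<le> measure M {\<omega>\<in>space M. \<bar>minX X (l-1) \<omega>\<bar> \<le> t}"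
    and "3 \<le> l \<Longrightarrow> 0 < measure M {\<omega>\<in>space M. Max ((\<lambda>i. \<bar>X i \<omega>\<bar>) ` {1..l-1}) \<le> t \<and> t < - X l \<omega>} \<Longrightarrow>
      measure M {\<omega>\<in>space M. \<bar>minX X l \<omega>\<bar> \<le> t} < measure M {\<omega>\<in>space M. \<bar>minX X (l-1) \<omega>\<bar> \<le> t}"
    and "l = 2 \<Longrightarrow> measure M {\<omega>\<in>space M. \<bar>minX X l \<omega>\<bar> \<le> t} = measure M {\<omega>\<in>space M. \<bar>minX X (l-1) \<omega>\<bar> \<le> t}"
proof -
  interpret prob_space M by fact
  have k: "1 \<le> k" "k < l" using R unfolding RE_kl_def by auto
  have kin: "k \<in> {1..l}" using k by simp
  have a: "1 \<le> l" "1 \<le> l-1" using l2 by auto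
  define E1 where "E1 = {\<omega>\<in>space M. \<bar>minX X l \<omega>\<bar> \<le> t}"
  define E2 where "E2 = {\<omega>\<in>space M. \<bar>minX X (l-1) \<omega>\<bar> \<le> t}"
  define G where "G = {\<omega>\<in>space M. (\<forall>i\<in>{1..l-1}. i \<noteq> k \<longrightarrow> t < X i \<omega>) \<and> X l \<omega> < -t \<and> -t \<le> X k \<omega> \<and> X k \<omega> \<le> t}"
  define H where "H = {\<omega>\<in>space M. Max ((\<lambda>i. \<bar>X i \<omega>\<bar>) ` {1..l-1}) \<le> t \<and> t < - X l \<omega>}"
  have m1: "(\<lambda>\<omega>. minX X l \<omega>) \<in> borel_measurable M" using mX by (rule meas_minX)
  have m2: "(\<lambda>\<omega>. minX X (l-1) \<omega>) \<in> borel_measurable M" using mX by (intro meas_minX) auto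
  have m3: "(\<lambda>\<omega>. Max ((\<lambda>i. \<bar>X i \<omega>\<bar>) ` {1..l-1})) \<in> borel_measurable M" using mX by (intro meas_Mabs) auto
  have m4: "X l \<in> borel_measurable M" using mX a by auto
  have sE1: "E1 \<in> sets M" unfolding E1_def pred_def[symmetric]
    by (intro pred_le borel_measurable_abs borel_measurable_const m1)
  have sE2: "E2 \<in> sets M" unfolding E2_def pred_def[symmetric]
    by (intro pred_le borel_measurable_abs borel_measurable_const m2)
  have sG: "G \<in> sets M" unfolding G_def by (rule sets_G2[OF mX kin])
  have sH: "H \<in> sets M" unfolding H_def pred_def[symmetric]
    by (intro pred_intros_logic(3) pred_le pred_lt borel_measurable_uminus borel_measurable_const m3 m4)
  have d: "measure M (E1 - E2) = measure M G"
    unfolding E1_def E2_def G_def by (rule min_step[OF P R l2 mX])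
  have c: "measure M E1 - measure M E2 = measure M (E1 - E2) - measure M (E2 - E1)"
    by (rule cmp[OF _ sE1 sE2]) (rule finite_measure_axioms)
  have sD: "E2 - E1 \<in> sets M" using sE1 sE2 by auto
  have E1e: "t < 0 \<Longrightarrow> E1 = {}" "t < 0 \<Longrightarrow> E2 = {}" unfolding E1_def E2_def by auto
  note am1 = abs_minX[OF a(1), of X]
  note am2 = abs_minX[OF a(2), of X]
  have GsubT: "G \<subseteq> E2 - E1" if t: "0 \<le> t"
  proof
    fix \<omega> assume w: "\<omega> \<in> G"
    have "\<forall>i\<in>{1..l-1}. -t \<le> X i \<omega>"
    proof
      fix i assume "i \<in> {1..l-1}"
      then show "-t \<le> X i \<omega>" using w t unfolding G_def by (cases "i = k") force+
    qed
    moreover have "\<exists>i\<in>{1..l-1}. X i \<omega> \<le> t" using w k unfolding G_def by (intro bexI[of _ k]) auto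
    moreover have "\<not> (\<forall>i\<in>{1..l}. -t \<le> X i \<omega>)" using w a unfolding G_def by force
    ultimately show "\<omega> \<in> E2 - E1" using w unfolding E1_def E2_def G_def am1 am2 by auto
  qed
  have HsubT: "H \<subseteq> E2 - E1"
  proof
    fix \<omega> assume w: "\<omega> \<in> H"
    have b: "\<bar>X i \<omega>\<bar> \<le> t" if "i \<in> {1..l-1}" for i
    proof -
      have "\<bar>X i \<omega>\<bar> \<le> Max ((\<lambda>i. \<bar>X i \<omega>\<bar>) ` {1..l-1})" by (rule Max_ge) (use that in auto)
      then show ?thesis using w unfolding H_def by auto
    qed
    have sp: "\<omega> \<in> space M" and tl: "t < - X l \<omega>" using w unfolding H_def by auto
    have b1: "\<forall>i\<in>{1..l-1}. -t \<le> X i \<omega>"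
    proof
      fix i assume "i \<in> {1..l-1}"
      from b[OF this] show "-t \<le> X i \<omega>" by (simp add: abs_le_iff)
    qed
    have one: "1 \<in> {1..l-1}" using a by simp
    have b2: "\<exists>i\<in>{1..l-1}. X i \<omega> \<le> t"
      using b[OF one] one by (intro bexI[of _ 1]) (simp_all add: abs_le_iff)
    have lin: "l \<in> {1..l}" using a by simp
    have b3: "\<not> (\<forall>i\<in>{1..l}. -t \<le> X i \<omega>)"
    proof
      assume "\<forall>i\<in>{1..l}. -t \<le> X i \<omega>"
      then have "-t \<le> X l \<omega>" using lin by blast
      then show False using tl by simp
    qed
    have "\<omega> \<in> E2" unfolding E2_def using sp b1 b2 am2 by blast
    moreover have "\<omega> \<notin> E1" unfolding E1_def using b3 am1 by blast
    ultimately show "\<omega> \<in> E2 - E1" by blast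
  qed
  show "measure M E1 \<le> measure M E2"
  proof (cases "0 \<le> t")
    case True
    have "measure M G \<le> measure M (E2 - E1)" using GsubT[OF True] sD by (intro finite_measure_mono)
    then show ?thesis using c d by linarith
  next
    case False then show ?thesis using E1e by simp
  qed
  show "measure M E1 < measure M E2" if l3: "3 \<le> l" and pH: "0 < measure M H"
  proof -
    have t: "0 \<le> t"
    proof (rule ccontr)
      assume "\<not> 0 \<le> t"
      then have "H = {}" unfolding H_def using a
        by (auto simp: Max_ge_iff)
      then show False using pH by simp
    qed
    obtain j where j: "j \<in> {1..l-1}" "j \<noteq> k"
    proof (cases "k = 1")
      case True then show ?thesis using that[of 2] l3 by auto
    next
      case False then show ?thesis using that[of 1] l3 by auto
    qed
    have disj: "G \<inter> H = {}"
    proof (rule ccontr)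
      assume "G \<inter> H \<noteq> {}"
      then obtain \<omega> where w: "\<omega> \<in> G" "\<omega> \<in> H" by auto
      have "\<bar>X j \<omega>\<bar> \<le> t"
      proof -
        have "\<bar>X j \<omega>\<bar> \<le> Max ((\<lambda>i. \<bar>X i \<omega>\<bar>) ` {1..l-1})" by (rule Max_ge) (use j in auto)
        then show ?thesis using w(2) unfolding H_def by auto
      qed
      moreover have "t < X j \<omega>" using w(1) j unfolding G_def by auto
      ultimately show False by linarith
    qed
    have "measure M (G \<union> H) \<le> measure M (E2 - E1)"
      using GsubT[OF t] HsubT sD by (intro finite_measure_mono) auto
    moreover have "measure M (G \<union> H) = measure M G + measure M H"
      using disj sG sH by (intro finite_measure_Union) auto
    ultimately show ?thesis using c d pH by linarith
  qed
  show "measure M E1 = measure M E2" if l2': "l = 2"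
  proof (cases "0 \<le> t")
    case True
    have k1: "k = 1" using k l2' by auto
    have "E2 - E1 \<subseteq> G"
    proof
      fix \<omega> assume w: "\<omega> \<in> E2 - E1"
      have s12: "{1..l} = {1,2}" "{1..l-1} = {1}" using l2' by auto
      show "\<omega> \<in> G" using w l2' k1 unfolding E1_def E2_def G_def am1 am2 s12 by auto
    qed
    then have "E2 - E1 = G" using GsubT[OF True] by auto
    then have "measure M (E2 - E1) = measure M G" by simp
    then show ?thesis using c d by linarith
  next
    case False then show ?thesis using E1e by simp
  qed
qed


theorem theorem3p6:
  fixes M :: "'a measure" and X :: "nat \<Rightarrow> 'a \<Rightarrow> real" and n :: enat
  assumes "prob_space M"
    and "n \<ge> 2"
    and "\<And>i. 1 \<le> i \<Longrightarrow> enat i \<le> n \<Longrightarrow> X i \<in> borel_measurable M"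
    and "\<And>l. 2 \<le> l \<Longrightarrow> enat l \<le> n \<Longrightarrow> RE M X l"
  shows "SIAMX M X n \<and> SIAMN M X n
    \<and> ((\<forall>l. 3 \<le> l \<and> enat l \<le> n \<longrightarrow>
          measure M {\<omega> \<in> space M. X l \<omega> > Max ((\<lambda>i. \<bar>X i \<omega>\<bar>) ` {1..l - 1})} > 0)
        \<longrightarrow> SSIAMX M X n)
    \<and> ((\<forall>l. 3 \<le> l \<and> enat l \<le> n \<longrightarrow>
          measure M {\<omega> \<in> space M. X l \<omega> < - Max ((\<lambda>i. \<bar>X i \<omega>\<bar>) ` {1..l - 1})} > 0)
        \<longrightarrow> SSIAMN M X n)"
proof -
  have P: "prob_space M" by fact
  interpret prob_space M by fact
  have mXl: "\<And>i. i \<in> {1..l} \<Longrightarrow> X i \<in> borel_measurable M" if "enat l \<le> n" for l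
    using assms(3) that by (meson atLeastAtMost_iff enat_ord_simps(1) order.trans)
  have getk: "\<exists>k. RE_kl M X k l" if "2 \<le> l" "enat l \<le> n" for l
    using assms(4)[OF that] unfolding RE_def by blast
  have n2: "enat 2 \<le> n" using assms(2) by (simp add: numeral_eq_enat)
  obtain k2 where R2: "RE_kl M X k2 2" using getk[OF le_refl n2] by blast
  note mX2 = mXl[OF n2]
  have X1: "X 1 \<in> borel_measurable M" using mX2 by auto
  have mm2: "(\<lambda>\<omega>. maxX X 2 \<omega>) \<in> borel_measurable M" using mX2 by (rule meas_maxX)
  have mn2: "(\<lambda>\<omega>. minX X 2 \<omega>) \<in> borel_measurable M" using mX2 by (rule meas_minX)
  have m1: "maxX X 1 \<omega> = X 1 \<omega>" "minX X 1 \<omega> = X 1 \<omega>" for \<omega> by (simp_all add: maxX_def minX_def)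
  have m1s: "maxX X (Suc 0) \<omega> = X (Suc 0) \<omega>" "minX X (Suc 0) \<omega> = X (Suc 0) \<omega>" for \<omega>
    by (simp_all add: maxX_def minX_def)
  have eqX: "eq_dist M (\<lambda>\<omega>. \<bar>X 1 \<omega>\<bar>) (\<lambda>\<omega>. \<bar>maxX X 2 \<omega>\<bar>)"
  proof (rule eq_dist_cdf[OF P])
    fix x
    show "cdf_rv M (\<lambda>\<omega>. \<bar>X 1 \<omega>\<bar>) x = cdf_rv M (\<lambda>\<omega>. \<bar>maxX X 2 \<omega>\<bar>) x"
      using max_mono(3)[OF P R2 le_refl mX2, of x] unfolding cdf_rv_def by (simp add: m1 m1s)
  qed (intro borel_measurable_abs X1 mm2)+
  have eqN: "eq_dist M (\<lambda>\<omega>. \<bar>X 1 \<omega>\<bar>) (\<lambda>\<omega>. \<bar>minX X 2 \<omega>\<bar>)"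
  proof (rule eq_dist_cdf[OF P])
    fix x
    show "cdf_rv M (\<lambda>\<omega>. \<bar>X 1 \<omega>\<bar>) x = cdf_rv M (\<lambda>\<omega>. \<bar>minX X 2 \<omega>\<bar>) x"
      using min_mono(3)[OF P R2 le_refl mX2, of x] unfolding cdf_rv_def by (simp add: m1 m1s)
  qed (intro borel_measurable_abs X1 mn2)+
  have leX: "st_le M (\<lambda>\<omega>. \<bar>maxX X (l - 1) \<omega>\<bar>) (\<lambda>\<omega>. \<bar>maxX X l \<omega>\<bar>)" if hl: "3 \<le> l" "enat l \<le> n" for l
  proof -
    obtain k where R: "RE_kl M X k l" using getk[of l] hl by auto
    show ?thesis unfolding st_le_def cdf_rv_def
      using max_mono(1)[OF P R _ mXl[OF hl(2)]] hl by auto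
  qed
  have leN: "st_le M (\<lambda>\<omega>. \<bar>minX X (l - 1) \<omega>\<bar>) (\<lambda>\<omega>. \<bar>minX X l \<omega>\<bar>)" if hl: "3 \<le> l" "enat l \<le> n" for l
  proof -
    obtain k where R: "RE_kl M X k l" using getk[of l] hl by auto
    show ?thesis unfolding st_le_def cdf_rv_def
      using min_mono(1)[OF P R _ mXl[OF hl(2)]] hl by auto
  qed
  have lessX: "st_less M (\<lambda>\<omega>. \<bar>maxX X (l - 1) \<omega>\<bar>) (\<lambda>\<omega>. \<bar>maxX X l \<omega>\<bar>)"
    if hl: "3 \<le> l" "enat l \<le> n" and pos: "measure M {\<omega> \<in> space M. X l \<omega> > Max ((\<lambda>i. \<bar>X i \<omega>\<bar>) ` {1..l - 1})} > 0" for l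
  proof -
    obtain k where R: "RE_kl M X k l" using getk[of l] hl by auto
    note mX = mXl[OF hl(2)]
    have m3: "(\<lambda>\<omega>. Max ((\<lambda>i. \<bar>X i \<omega>\<bar>) ` {1..l-1})) \<in> borel_measurable M" using mX by (intro meas_Mabs) auto
    have m4: "X l \<in> borel_measurable M" using mX hl by auto
    obtain q where q: "measure M {\<omega>\<in>space M. Max ((\<lambda>i. \<bar>X i \<omega>\<bar>) ` {1..l-1}) \<le> q \<and> q < X l \<omega>} > 0"
      using pos_rat[OF P m3 m4 pos] by auto
    have "cdf_rv M (\<lambda>\<omega>. \<bar>maxX X (l - 1) \<omega>\<bar>) q > cdf_rv M (\<lambda>\<omega>. \<bar>maxX X l \<omega>\<bar>) q"
      unfolding cdf_rv_def using max_mono(2)[OF P R _ mX hl(1) q] hl by auto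
    then show ?thesis unfolding st_less_def using leX[OF hl(1,2)] by auto
  qed
  have lessN: "st_less M (\<lambda>\<omega>. \<bar>minX X (l - 1) \<omega>\<bar>) (\<lambda>\<omega>. \<bar>minX X l \<omega>\<bar>)"
    if hl: "3 \<le> l" "enat l \<le> n" and pos: "measure M {\<omega> \<in> space M. X l \<omega> < - Max ((\<lambda>i. \<bar>X i \<omega>\<bar>) ` {1..l - 1})} > 0" for l
  proof -
    obtain k where R: "RE_kl M X k l" using getk[of l] hl by auto
    note mX = mXl[OF hl(2)]
    have m3: "(\<lambda>\<omega>. Max ((\<lambda>i. \<bar>X i \<omega>\<bar>) ` {1..l-1})) \<in> borel_measurable M" using mX by (intro meas_Mabs) auto
    have m4: "X l \<in> borel_measurable M" using mX hl by auto
    have eqs: "{\<omega> \<in> space M. X l \<omega> < - Max ((\<lambda>i. \<bar>X i \<omega>\<bar>) ` {1..l - 1})}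
      = {\<omega> \<in> space M. Max ((\<lambda>i. \<bar>X i \<omega>\<bar>) ` {1..l - 1}) < - X l \<omega>}" by auto
    obtain q where q: "measure M {\<omega>\<in>space M. Max ((\<lambda>i. \<bar>X i \<omega>\<bar>) ` {1..l-1}) \<le> q \<and> q < - X l \<omega>} > 0"
      using pos_rat[OF P m3 borel_measurable_uminus[OF m4] pos[unfolded eqs]] by auto
    have "cdf_rv M (\<lambda>\<omega>. \<bar>minX X (l - 1) \<omega>\<bar>) q > cdf_rv M (\<lambda>\<omega>. \<bar>minX X l \<omega>\<bar>) q"
      unfolding cdf_rv_def using min_mono(2)[OF P R _ mX hl(1) q] hl by auto
    then show ?thesis unfolding st_less_def using leN[OF hl(1,2)] by auto
  qed
  show ?thesis
    unfolding SIAMX_def SIAMN_def SSIAMX_def SSIAMN_def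
    using eqX eqN leX leN lessX lessN by blast
qed

end
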